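(* Let $L\ge1$, $\alpha\in(\alpha_{L+1},\alpha_L)$ and $K\in\{0,1,\dots,L+1\}$. Then the system $(E_K)$ together with the extra condition $l_{K+2}=0$ has a unique solution $(l_0,\dots,l_{K+2})$, given by $$l_j=\frac{\sin\big(\frac{K+2-j}{2}\omega\big)\sin\big(\frac{j\omega}{2}\big)}{Z},\quad j\in\{0,\dots,K+2\},\qquad Z:=\sum_{i=1}^{K+1}\sin\big(\tfrac{K+2-i}{2}\omega\big)\sin\big(\tfrac{i\omega}{2}\big),$$ and it satisfies $$d_0=-d_{K+1}=-\alpha\,\frac{\sin\big(\frac{K+3}{2}\omega\big)\sin\big(\frac{\omega}{2}\big)}{Z}.$$ Moreover $l_1,\dots,l_{K+1}>0$, and $d_0<0$ if $K\in\{0,\dots,L-1\}$, while $d_0>0$ if $K\in\{L,L+1\}$. Finally, the two displayed formulas also hold when $\alpha=\alpha_L$ and $K\in\{1,\dots,L-1\}$.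
   Context: Define $\alpha_1:=+\infty$ and, for $L\ge2$, $\alpha_L:=\dfrac{1}{1+2\cos(\frac{2\pi}{L+2})}$. For $\alpha>1/3$, let $\omega\in(0,\pi)$ be the unique real with $\cos\omega=\frac{1-\alpha}{2\alpha}$ (so $\alpha\in(\alpha_{L+1},\alpha_L)$ iff $\frac{2\pi}{L+3}<\omega<\frac{2\pi}{L+2}$). For an integer $K\ge0$ and a real vector $(l_0,\dots,l_{K+2})$, set $d_0:=l_0-l_1+\alpha l_2$, $d_j:=-\alpha l_{j-1}+l_j-l_{j+1}+\alpha l_{j+2}$ for $j\in\{1,\dots,K\}$, and $d_{K+1}:=-\alpha l_K+l_{K+1}-l_{K+2}$. The system $(E_K)$ is: $d_1=\dots=d_K=0$, $l_0=0$, and $\sum_{j=1}^{K+1}l_j=1$. *)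

theory Defs
  imports Complex_Main "HOL-Library.Extended_Real"
begin

definition alpha_fin :: "nat \<Rightarrow> real" where
  "alpha_fin L = 1 / (1 + 2 * cos (2 * pi / (real L + 2)))"

definition alphaL :: "nat \<Rightarrow> ereal" where
  "alphaL L = (if L \<le> 1 then \<infinity> else ereal (alpha_fin L))"

definition omega :: "real \<Rightarrow> real" where
  "omega \<alpha> = arccos ((1 - \<alpha>) / (2 * \<alpha>))"

definition dval :: "real \<Rightarrow> nat \<Rightarrow> (nat \<Rightarrow> real) \<Rightarrow> nat \<Rightarrow> real" where
  "dval \<alpha> K l j =
     (if j = 0 then l 0 - l 1 + \<alpha> * l 2
      else if j \<le> K then - \<alpha> * l (j - 1) + l j - l (j + 1) + \<alpha> * l (j + 2)
      else - \<alpha> * l K + l (K + 1) - l (K + 2))"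

definition sysE :: "real \<Rightarrow> nat \<Rightarrow> (nat \<Rightarrow> real) \<Rightarrow> bool" where
  "sysE \<alpha> K l \<longleftrightarrow> (\<forall>j\<in>{1..K}. dval \<alpha> K l j = 0) \<and> l 0 = 0 \<and> (\<Sum>j=1..K+1. l j) = 1"

definition Zc :: "real \<Rightarrow> nat \<Rightarrow> real" where
  "Zc \<alpha> K = (\<Sum>i=1..K+1. sin ((real K + 2 - real i) / 2 * omega \<alpha>) * sin (real i * omega \<alpha> / 2))"

definition lsol :: "real \<Rightarrow> nat \<Rightarrow> nat \<Rightarrow> real" where
  "lsol \<alpha> K j = sin ((real K + 2 - real j) / 2 * omega \<alpha>) * sin (real j * omega \<alpha> / 2) / Zc \<alpha> K"

end

theory Submission imports Defs begin


definition fSW :: "real \<Rightarrow> real \<Rightarrow> real \<Rightarrow> real \<Rightarrow> real" where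
  "fSW A B w t = A * sin (t * w) + B * (1 - cos (t * w))"

lemma fSW_rec:
  assumes key: "\<alpha> * (1 + 2 * cos w) = 1"
  shows "- \<alpha> * fSW A B w (t - 1) + fSW A B w t - fSW A B w (t + 1) + \<alpha> * fSW A B w (t + 2) = 0"
proof -
  have e1: "(t - 1) * w = t * w - w" "(t + 1) * w = t * w + w" "(t + 2) * w = t * w + 2 * w"
    by (simp_all add: algebra_simps)
  define P where "P = sin (t * w)"
  define Q where "Q = cos (t * w)"
  define s where "s = sin w"
  define c where "c = cos w"
  have "- \<alpha> * fSW A B w (t - 1) + fSW A B w t - fSW A B w (t + 1) + \<alpha> * fSW A B w (t + 2)
     = - \<alpha> * (A * (P*c - Q*s) + B * (1 - (Q*c + P*s))) + (A*P + B*(1-Q))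
       - (A * (P*c + Q*s) + B * (1 - (Q*c - P*s)))
       + \<alpha> * (A * (P*(2*c^2-1) + Q*(2*s*c)) + B * (1 - (Q*(2*c^2-1) - P*(2*s*c))))"
    unfolding fSW_def e1 sin_add sin_diff cos_add cos_diff sin_double cos_double_cos P_def Q_def s_def c_def
    by (simp add: algebra_simps)
  also have "\<dots> = (1 - \<alpha> * (1 + 2*c)) * (A * ((1-c)*P - s*Q) - B * ((1-c)*Q + s*P))"
    by (simp add: algebra_simps power2_eq_square)
  also have "\<dots> = 0" using key by (simp add: c_def)
  finally show ?thesis .
qed



lemma repr:
  fixes l :: "nat \<Rightarrow> real"
  assumes w0: "0 < w" and wpi: "w < pi" and key: "\<alpha> * (1 + 2 * cos w) = 1"
    and l0: "l 0 = 0"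
    and rec: "\<forall>j\<in>{1..K}. - \<alpha> * l (j - 1) + l j - l (j + 1) + \<alpha> * l (j + 2) = 0"
  shows "\<exists>A B. \<forall>j\<le>K+2. l j = fSW A B w (real j)"
proof -
  have s0: "sin w > 0" using w0 wpi sin_gt_zero by blast
  have c1: "cos w < 1" using cos_monotone_0_pi[of 0 w] w0 wpi by simp
  have a0: "\<alpha> \<noteq> 0" using key by auto
  define B where "B = (l 2 - 2 * cos w * l 1) / (2 * (1 - cos w))"
  define A where "A = (l 1 - B * (1 - cos w)) / sin w"
  have h1: "l 1 = fSW A B w 1" using s0 unfolding fSW_def A_def by simp
  have h2: "l 2 = fSW A B w 2"
  proof -
    have "fSW A B w 2 = 2 * cos w * (A * sin w) + 2 * (1 - cos w) * (1 + cos w) * B"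
      unfolding fSW_def sin_double cos_double_cos
      by (simp add: algebra_simps power2_eq_square)
    also have "A * sin w = l 1 - B * (1 - cos w)" using s0 unfolding A_def by simp
    finally have "fSW A B w 2 = 2 * cos w * l 1 + 2 * (1 - cos w) * B"
      by (simp add: algebra_simps)
    also have "2 * (1 - cos w) * B = l 2 - 2 * cos w * l 1" using c1 unfolding B_def by simp
    finally show ?thesis by simp
  qed
  have "j \<le> K + 2 \<longrightarrow> l j = fSW A B w (real j)" for j
  proof (induction j rule: less_induct)
    case (less j)
    show ?case
    proof (cases "j \<le> 2")
      case True
      then have "j = 0 \<or> j = 1 \<or> j = 2" by auto
      then show ?thesis using h1 h2 l0 by (auto simp: fSW_def)
    next
      case False
      define m where "m = j - 3"
      have m: "j = m + 3" using False unfolding m_def by simp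
      show ?thesis
      proof
        assume jK: "j \<le> K + 2"
        have IH: "l m = fSW A B w (real m)" "l (m+1) = fSW A B w (real (m+1))"
                 "l (m+2) = fSW A B w (real (m+2))"
          using less.IH[of m] less.IH[of "m+1"] less.IH[of "m+2"] jK m by simp_all
        have "m + 1 \<in> {1..K}" using jK m by auto
        then have r0: "- \<alpha> * l ((m+1) - 1) + l (m+1) - l ((m+1)+1) + \<alpha> * l ((m+1)+2) = 0"
          using rec by blast
        have e2: "(m+1)-1 = m" "(m+1)+1 = m+2" "(m+1)+2 = m+3" by simp_all
        have r1: "- \<alpha> * l m + l (m+1) - l (m+2) + \<alpha> * l (m+3) = 0"
          using r0 unfolding e2 .
        have r2: "- \<alpha> * fSW A B w (real (m+1) - 1) + fSW A B w (real (m+1)) - fSW A B w (real (m+1) + 1)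
              + \<alpha> * fSW A B w (real (m+1) + 2) = 0" by (rule fSW_rec[OF key])
        have e: "real (m+1) - 1 = real m" "real (m+1) + 1 = real (m+2)" "real (m+1) + 2 = real (m+3)"
          by simp_all
        have r1': "\<alpha> * l (m+3) = \<alpha> * l m - l (m+1) + l (m+2)" using r1 by (simp add: algebra_simps)
        have r2': "\<alpha> * fSW A B w (real (m+3)) = \<alpha> * fSW A B w (real m) - fSW A B w (real (m+1)) + fSW A B w (real (m+2))"
          using r2 unfolding e by (simp add: algebra_simps)
        have "\<alpha> * l (m+3) = \<alpha> * fSW A B w (real (m+3))" unfolding r1' r2' IH ..
        then show "l j = fSW A B w (real j)" using a0 m by simp
      qed
    qed
  qed
  then show ?thesis by blast
qed



lemma vrepr:
  "sin ((real K + 2 - real j) / 2 * w) * sin (real j * w / 2)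
   = fSW (sin ((real K + 2) / 2 * w) / 2) (- cos ((real K + 2) / 2 * w) / 2) w (real j)"
proof -
  define N where "N = (real K + 2) / 2 * w"
  define y where "y = real j * w / 2"
  have e1: "(real K + 2 - real j) / 2 * w = N - y" unfolding N_def y_def by (simp add: field_simps)
  have e2: "real j * w = 2 * y" unfolding y_def by simp
  show ?thesis unfolding e1 fSW_def e2 sin_diff sin_double cos_double_sin N_def[symmetric] y_def[symmetric]
    by (simp add: algebra_simps power2_eq_square)
qed

lemma lsol_repr:
  assumes "omega \<alpha> = w"
  shows "lsol \<alpha> K j = fSW (sin ((real K + 2) / 2 * w) / 2 / Zc \<alpha> K) (- cos ((real K + 2) / 2 * w) / 2 / Zc \<alpha> K) w (real j)"
  unfolding lsol_def assms vrepr by (simp add: fSW_def add_divide_distrib diff_divide_distrib)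

lemma Zc_sum:
  assumes "omega \<alpha> = w"
  shows "Zc \<alpha> K = (\<Sum>i=1..K+1. sin ((real K + 2 - real i) / 2 * w) * sin (real i * w / 2))"
  unfolding Zc_def assms ..



lemma lsol_sym:
  assumes "j \<le> K + 2"
  shows "lsol \<alpha> K (K + 2 - j) = lsol \<alpha> K j"
proof -
  have e1: "(real K + 2 - real (K + 2 - j)) / 2 * omega \<alpha> = real j * omega \<alpha> / 2"
    using assms by (simp add: of_nat_diff)
  have e2: "real (K + 2 - j) * omega \<alpha> / 2 = (real K + 2 - real j) / 2 * omega \<alpha>"
    using assms by (simp add: of_nat_diff)
  show ?thesis unfolding lsol_def e1 e2 by simp
qed

lemma d0_formula_aux:
  assumes key: "\<alpha> * (1 + 2 * cos w) = 1"
  shows "- (sin ((real K + 2 - 1) / 2 * w) * sin (1 * w / 2))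
         + \<alpha> * (sin ((real K + 2 - 2) / 2 * w) * sin (2 * w / 2))
       = - \<alpha> * (sin ((real K + 3) / 2 * w) * sin (w / 2))"
proof -
  define x where "x = w / 2"
  define y where "y = (real K + 1) / 2 * w"
  have e: "(real K + 2 - 1) / 2 * w = y" "1 * w / 2 = x" "(real K + 2 - 2) / 2 * w = y - x"
     "2 * w / 2 = 2 * x" "(real K + 3) / 2 * w = y + 2 * x" "w / 2 = x" "w = 2 * x"
    unfolding x_def y_def by (simp_all add: field_simps)
  have k2: "\<alpha> * (1 + 2 * cos (2 * x)) = 1" using key e(7) by simp
  have "(- (sin y * sin x) + \<alpha> * (sin (y - x) * sin (2 * x)))
        - (- \<alpha> * (sin (y + 2 * x) * sin x))
       = sin y * sin x * (\<alpha> * (1 + 2 * cos (2 * x)) - 1)"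
    unfolding sin_add sin_diff sin_double cos_double_cos
    by (simp add: algebra_simps power2_eq_square)
  also have "\<dots> = 0" using k2 by simp
  finally show ?thesis unfolding e(1-6) by simp
qed



lemma core:
  fixes \<alpha> w :: real and K :: nat
  assumes om: "omega \<alpha> = w" and w0: "0 < w" and wpi: "w < pi"
    and wK1: "(real K + 1) * w < 2 * pi" and wK2: "(real K + 2) * w \<noteq> 2 * pi"
    and key: "\<alpha> * (1 + 2 * cos w) = 1" and apos: "\<alpha> > 0"
  shows "(\<forall>l. (sysE \<alpha> K l \<and> l (K + 2) = 0) \<longleftrightarrow> (\<forall>j\<le>K+2. l j = lsol \<alpha> K j))
       \<and> dval \<alpha> K (lsol \<alpha> K) 0 = - dval \<alpha> K (lsol \<alpha> K) (K + 1)
       \<and> dval \<alpha> K (lsol \<alpha> K) 0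
           = - \<alpha> * (sin ((real K + 3) / 2 * omega \<alpha>) * sin (omega \<alpha> / 2)) / Zc \<alpha> K
       \<and> (\<forall>j\<in>{1..K+1}. lsol \<alpha> K j > 0) \<and> Zc \<alpha> K > 0"
proof -
  define v where "v j = sin ((real K + 2 - real j) / 2 * w) * sin (real j * w / 2)" for j
  define N where "N = (real K + 2) / 2 * w"
  have vpos: "v j > 0" if j: "j \<in> {1..K+1}" for j
  proof -
    have j1: "1 \<le> real j" "real j \<le> real K + 1" using j by auto
    have a: "0 < real j * w / 2" using j1 w0 by simp
    have "real j * w \<le> (real K + 1) * w" using j1 w0 by (simp add: mult_right_mono)
    then have b: "real j * w / 2 < pi" using wK1 by simp
    have c: "0 < (real K + 2 - real j) / 2 * w" using j1 w0 by simp
    have "(real K + 2 - real j) * w \<le> (real K + 1) * w" using j1 w0 by (simp add: mult_right_mono)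
    then have d: "(real K + 2 - real j) / 2 * w < pi" using wK1 by simp
    show ?thesis unfolding v_def using sin_gt_zero[OF a b] sin_gt_zero[OF c d] by simp
  qed
  have Zv: "Zc \<alpha> K = (\<Sum>i=1..K+1. v i)" unfolding Zc_sum[OF om] v_def ..
  have Zpos: "Zc \<alpha> K > 0" unfolding Zv by (rule sum_pos) (use vpos in auto)
  have lv: "lsol \<alpha> K j = v j / Zc \<alpha> K" for j unfolding lsol_def om v_def ..
  have vf: "v j = fSW (sin N / 2) (- cos N / 2) w (real j)" for j unfolding v_def N_def vrepr ..
  have lpos: "\<forall>j\<in>{1..K+1}. lsol \<alpha> K j > 0" using vpos Zpos lv by simp
  have sN: "sin N \<noteq> 0"
  proof -
    have N0: "0 < N" unfolding N_def using w0 by simp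
    have "N < 3 * pi / 2" unfolding N_def using wK1 wpi by (simp add: algebra_simps)
    have Npi: "N \<noteq> pi" unfolding N_def using wK2 by (auto simp: field_simps)
    show ?thesis
    proof (cases "N < pi")
      case True then show ?thesis using sin_gt_zero[OF N0] by simp
    next
      case False
      then have "pi < N" using Npi by simp
      then show ?thesis using sin_lt_zero[of N] \<open>N < 3 * pi / 2\<close> by simp
    qed
  qed
  have lf: "lsol \<alpha> K j = fSW (sin N / 2 / Zc \<alpha> K) (- cos N / 2 / Zc \<alpha> K) w (real j)" for j
    unfolding lsol_repr[OF om] N_def ..
  have lrec: "- \<alpha> * lsol \<alpha> K (j - 1) + lsol \<alpha> K j - lsol \<alpha> K (j + 1) + \<alpha> * lsol \<alpha> K (j + 2) = 0"
    if "1 \<le> j" for j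
  proof -
    have e: "real (j - 1) = real j - 1" "real (j + 1) = real j + 1" "real (j + 2) = real j + 2"
      using that by (simp_all add: of_nat_diff)
    show ?thesis unfolding lf e by (rule fSW_rec[OF key])
  qed
  have l0: "lsol \<alpha> K 0 = 0" unfolding lsol_def by simp
  have lK2: "lsol \<alpha> K (K + 2) = 0" unfolding lsol_def by simp
  have lsum: "(\<Sum>j=1..K+1. lsol \<alpha> K j) = 1"
    unfolding lv sum_divide_distrib[symmetric] Zv[symmetric] using Zpos by simp
  have uniq: "(sysE \<alpha> K l \<and> l (K + 2) = 0) \<longleftrightarrow> (\<forall>j\<le>K+2. l j = lsol \<alpha> K j)" for l
  proof
    assume H: "sysE \<alpha> K l \<and> l (K + 2) = 0"
    have rec: "\<forall>j\<in>{1..K}. - \<alpha> * l (j - 1) + l j - l (j + 1) + \<alpha> * l (j + 2) = 0"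
    proof
      fix j assume j: "j \<in> {1..K}"
      then have "dval \<alpha> K l j = 0" using H unfolding sysE_def by blast
      then show "- \<alpha> * l (j - 1) + l j - l (j + 1) + \<alpha> * l (j + 2) = 0"
        using j unfolding dval_def by auto
    qed
    have hl0: "l 0 = 0" and hsum: "(\<Sum>j=1..K+1. l j) = 1" using H unfolding sysE_def by auto
    obtain A B where AB: "\<forall>j\<le>K+2. l j = fSW A B w (real j)"
      using repr[OF w0 wpi key hl0 rec] by blast
    have "fSW A B w (real (K + 2)) = 0" using AB H by simp
    moreover have "real (K + 2) * w = 2 * N" unfolding N_def by simp
    ultimately have "A * sin (2 * N) + B * (1 - cos (2 * N)) = 0" unfolding fSW_def by simp
    then have "2 * sin N * (A * cos N + B * sin N) = 0"
      unfolding sin_double cos_double_sin by (simp add: algebra_simps power2_eq_square)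
    then have eq: "B * sin N = - (A * cos N)" using sN by simp
    define t where "t = A * sin N - B * cos N"
    have sc: "sin N ^ 2 + cos N ^ 2 = 1" by simp
    have At: "A = t * sin N"
    proof -
      have "t * sin N = A * sin N ^ 2 - cos N * (B * sin N)" unfolding t_def by (simp add: algebra_simps power2_eq_square)
      also have "\<dots> = A * (sin N ^ 2 + cos N ^ 2)" unfolding eq by algebra
      also have "\<dots> = A" by simp
      finally show ?thesis by simp
    qed
    have Bt: "B = - t * cos N"
    proof -
      have "- t * cos N = sin N * (- (A * cos N)) + B * cos N ^ 2" unfolding t_def by (simp add: algebra_simps power2_eq_square)
      also have "\<dots> = B * (sin N ^ 2 + cos N ^ 2)" unfolding eq[symmetric] by algebra
      also have "\<dots> = B" by simp
      finally show ?thesis by simp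
    qed
    have lt: "\<forall>j\<le>K+2. l j = 2 * t * v j"
      using AB unfolding vf At Bt by (simp add: fSW_def algebra_simps)
    have "1 = (\<Sum>j=1..K+1. 2 * t * v j)" unfolding hsum[symmetric] by (rule sum.cong) (use lt in auto)
    also have "\<dots> = 2 * t * Zc \<alpha> K" unfolding Zv sum_distrib_left ..
    finally have tZ: "2 * t = 1 / Zc \<alpha> K" using Zpos by (simp add: field_simps)
    show "\<forall>j\<le>K+2. l j = lsol \<alpha> K j" using lt unfolding lv tZ by simp
  next
    assume H: "\<forall>j\<le>K+2. l j = lsol \<alpha> K j"
    have "\<forall>j\<in>{1..K}. dval \<alpha> K l j = 0"
    proof
      fix j assume j: "j \<in> {1..K}"
      have "dval \<alpha> K l j = - \<alpha> * l (j - 1) + l j - l (j + 1) + \<alpha> * l (j + 2)"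
        using j unfolding dval_def by auto
      also have "\<dots> = - \<alpha> * lsol \<alpha> K (j - 1) + lsol \<alpha> K j - lsol \<alpha> K (j + 1) + \<alpha> * lsol \<alpha> K (j + 2)"
        using H j by auto
      also have "\<dots> = 0" using lrec j by auto
      finally show "dval \<alpha> K l j = 0" .
    qed
    moreover have "l 0 = 0" using H l0 by simp
    moreover have "(\<Sum>j=1..K+1. l j) = 1" unfolding lsum[symmetric] by (rule sum.cong) (use H in auto)
    moreover have "l (K + 2) = 0" using H lK2 by simp
    ultimately show "sysE \<alpha> K l \<and> l (K + 2) = 0" unfolding sysE_def by blast
  qed
  have s1: "lsol \<alpha> K (K + 1) = lsol \<alpha> K 1" using lsol_sym[of 1 K \<alpha>] by simp
  have s2: "lsol \<alpha> K K = lsol \<alpha> K 2" using lsol_sym[of 2 K \<alpha>] by simp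
  have d0: "dval \<alpha> K (lsol \<alpha> K) 0 = - lsol \<alpha> K 1 + \<alpha> * lsol \<alpha> K 2"
    unfolding dval_def using l0 by simp
  have dK: "dval \<alpha> K (lsol \<alpha> K) (K + 1) = - \<alpha> * lsol \<alpha> K 2 + lsol \<alpha> K 1"
    unfolding dval_def using lK2 s1 s2 by simp
  have dform: "dval \<alpha> K (lsol \<alpha> K) 0
           = - \<alpha> * (sin ((real K + 3) / 2 * omega \<alpha>) * sin (omega \<alpha> / 2)) / Zc \<alpha> K"
  proof -
    have "dval \<alpha> K (lsol \<alpha> K) 0 = (- (sin ((real K + 2 - 1) / 2 * w) * sin (1 * w / 2))
         + \<alpha> * (sin ((real K + 2 - 2) / 2 * w) * sin (2 * w / 2))) / Zc \<alpha> K"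
      unfolding d0 lsol_def om using Zpos by (simp add: field_simps)
    then show ?thesis unfolding d0_formula_aux[OF key] om .
  qed
  show ?thesis using uniq dK d0 dform lpos Zpos by auto
qed



lemma arg_facts:
  assumes "0 \<le> th" "th \<le> pi / 2" "a = 1 / (1 + 2 * cos th)"
  shows "a > 0" "(1 - a) / (2 * a) = cos th" "omega a = th" "a * (1 + 2 * cos th) = 1"
proof -
  have c0: "cos th \<ge> 0" using assms cos_ge_zero[of th] by simp
  then show ap: "a > 0" using assms by simp
  show k: "a * (1 + 2 * cos th) = 1" using assms c0 by simp
  have "1 - a = 2 * a * cos th" using k by (simp add: algebra_simps)
  then show e: "(1 - a) / (2 * a) = cos th" using ap by simp
  show "omega a = th" unfolding omega_def e using assms arccos_cos[of th] by simp
qed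

theorem mainTheorem8:
  fixes L K :: nat and \<alpha> :: real
  assumes "L \<ge> 1"
    and "alphaL (L + 1) < ereal \<alpha>" and "ereal \<alpha> < alphaL L"
    and "K \<le> L + 1"
  shows "(\<forall>l. (sysE \<alpha> K l \<and> l (K + 2) = 0) \<longleftrightarrow> (\<forall>j\<le>K+2. l j = lsol \<alpha> K j))
       \<and> dval \<alpha> K (lsol \<alpha> K) 0 = - dval \<alpha> K (lsol \<alpha> K) (K + 1)
       \<and> dval \<alpha> K (lsol \<alpha> K) 0
           = - \<alpha> * (sin ((real K + 3) / 2 * omega \<alpha>) * sin (omega \<alpha> / 2)) / Zc \<alpha> K
       \<and> (\<forall>j\<in>{1..K+1}. lsol \<alpha> K j > 0)
       \<and> (K \<le> L - 1 \<longrightarrow> dval \<alpha> K (lsol \<alpha> K) 0 < 0)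
       \<and> (L \<le> K \<longrightarrow> dval \<alpha> K (lsol \<alpha> K) 0 > 0)
       \<and> (\<forall>K'. 1 \<le> K' \<and> K' \<le> L - 1 \<longrightarrow>
            (let a = alpha_fin L in
              (\<forall>l. (sysE a K' l \<and> l (K' + 2) = 0) \<longleftrightarrow> (\<forall>j\<le>K'+2. l j = lsol a K' j))
              \<and> dval a K' (lsol a K') 0 = - dval a K' (lsol a K') (K' + 1)
              \<and> dval a K' (lsol a K') 0
                  = - a * (sin ((real K' + 3) / 2 * omega a) * sin (omega a / 2)) / Zc a K'))"
proof -
  define th1 where "th1 = 2 * pi / (real L + 3)"
  define th0 where "th0 = 2 * pi / (real L + 2)"
  define w where "w = omega \<alpha>"
  define arg where "arg = (1 - \<alpha>) / (2 * \<alpha>)"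
  have L1: "real L \<ge> 1" using assms(1) by simp
  have th1p: "0 < th1" "th1 \<le> pi / 2" unfolding th1_def using L1 pi_gt_zero by (auto simp: field_simps)
  have th0p: "0 < th0" "th0 \<le> 2 * pi / 3" unfolding th0_def using L1 pi_gt_zero by (auto simp: field_simps)
  define a1 where "a1 = alpha_fin (L + 1)"
  have r3: "real (L + 1) + 2 = real L + 3" by simp
  have a1e: "a1 = 1 / (1 + 2 * cos th1)" unfolding a1_def alpha_fin_def th1_def r3 ..
  note A1 = arg_facts[OF less_imp_le[OF th1p(1)] th1p(2) a1e]
  have "alphaL (L + 1) = ereal a1" unfolding alphaL_def a1_def using assms(1) by simp
  then have aa1: "a1 < \<alpha>" using assms(2) by simp
  have apos: "\<alpha> > 0" using aa1 A1(1) by simp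
  have argeq: "arg = 1 / (2 * \<alpha>) - 1 / 2" unfolding arg_def using apos by (simp add: field_simps)
  have c1eq: "cos th1 = 1 / (2 * a1) - 1 / 2" using A1(2) A1(1) by (simp add: field_simps)
  have "1 / (2 * \<alpha>) < 1 / (2 * a1)" using aa1 A1(1) by (simp add: frac_less2)
  then have argc1: "arg < cos th1" unfolding argeq c1eq by simp
  have argm: "arg > - 1 / 2" unfolding argeq using apos by simp
  have c0lt: "cos th0 < arg"
  proof (cases "L = 1")
    case True
    then have "th0 = 2 * pi / 3" unfolding th0_def by simp
    then have "cos th0 = - 1 / 2" by (simp only: cos_120)
    then show ?thesis using argm by simp
  next
    case False
    define a0 where "a0 = alpha_fin L"
    have th0q: "th0 \<le> pi / 2" unfolding th0_def using False assms(1) pi_gt_zero by (auto simp: field_simps)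
    have a0e: "a0 = 1 / (1 + 2 * cos th0)" unfolding a0_def alpha_fin_def th0_def ..
    note A0 = arg_facts[OF less_imp_le[OF th0p(1)] th0q a0e]
    have "alphaL L = ereal a0" unfolding alphaL_def a0_def using False assms(1) by simp
    then have "\<alpha> < a0" using assms(3) by simp
    then have "1 / (2 * a0) < 1 / (2 * \<alpha>)" using apos by (simp add: frac_less2)
    moreover have "cos th0 = 1 / (2 * a0) - 1 / 2" using A0(2) A0(1) by (simp add: field_simps)
    ultimately show ?thesis unfolding argeq by simp
  qed
  have c1le: "cos th1 \<le> 1" by simp
  have cth0: "cos th0 \<ge> -1" by simp
  have wdef: "w = arccos arg" unfolding w_def omega_def arg_def ..
  have cw: "cos w = arg" unfolding wdef using argm argc1 c1le cos_arccos[of arg] by linarith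
  have wth1: "th1 < w"
    using arccos_less_arccos[of arg "cos th1"] argm argc1 arccos_cos[of th1] th1p pi_gt_zero
    unfolding wdef by simp
  have wth0: "w < th0"
    using arccos_less_arccos[of "cos th0" arg] cth0 c0lt argc1 c1le arccos_cos[of th0] th0p pi_gt_zero
    unfolding wdef by simp
  have w0: "0 < w" using wth1 th1p by simp
  have wpi: "w < pi" using wth0 th0p pi_gt_zero by simp
  have key: "\<alpha> * (1 + 2 * cos w) = 1" unfolding cw argeq using apos by (simp add: field_simps)
  have wL2: "(real L + 2) * w < 2 * pi" using wth0 unfolding th0_def by (simp add: field_simps)
  have wL3: "(real L + 3) * w > 2 * pi" using wth1 unfolding th1_def by (simp add: field_simps)
  have Kle: "real K \<le> real L + 1" using assms(4) by simp
  have wK1: "(real K + 1) * w < 2 * pi"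
  proof -
    have "(real K + 1) * w \<le> (real L + 2) * w" using Kle w0 by (simp add: mult_right_mono)
    then show ?thesis using wL2 by simp
  qed
  have wK2: "(real K + 2) * w \<noteq> 2 * pi"
  proof (cases "K \<le> L")
    case True
    then have "(real K + 2) * w \<le> (real L + 2) * w" using w0 by (simp add: mult_right_mono)
    then show ?thesis using wL2 by simp
  next
    case False
    then have "real K \<ge> real L + 1" by simp
    then have "(real K + 2) * w \<ge> (real L + 3) * w" using w0 by (simp add: mult_right_mono)
    then show ?thesis using wL3 by simp
  qed
  note C = core[OF w_def[symmetric] w0 wpi wK1 wK2 key apos]
  have Zp: "Zc \<alpha> K > 0" using C by blast
  have dform: "dval \<alpha> K (lsol \<alpha> K) 0 = - \<alpha> * (sin ((real K + 3) / 2 * w) * sin (w / 2)) / Zc \<alpha> K"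
    using C unfolding w_def by blast
  have sw2: "sin (w / 2) > 0" using w0 wpi by (simp add: sin_gt_zero)
  have neg: "dval \<alpha> K (lsol \<alpha> K) 0 < 0" if "K \<le> L - 1"
  proof -
    have "real K + 3 \<le> real L + 2" using that assms(1) by linarith
    then have "(real K + 3) * w \<le> (real L + 2) * w" using w0 by (simp add: mult_right_mono)
    then have "(real K + 3) / 2 * w < pi" using wL2 by simp
    moreover have "0 < (real K + 3) / 2 * w" using w0 by simp
    ultimately have "sin ((real K + 3) / 2 * w) > 0" by (simp add: sin_gt_zero)
    then show ?thesis unfolding dform using apos sw2 Zp by (simp add: mult_pos_pos divide_neg_pos)
  qed
  have pos: "dval \<alpha> K (lsol \<alpha> K) 0 > 0" if "L \<le> K"
  proof -
    have "real K + 3 \<ge> real L + 3" using that by simp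
    then have "(real K + 3) * w \<ge> (real L + 3) * w" using w0 by (simp add: mult_right_mono)
    then have "pi < (real K + 3) / 2 * w" using wL3 by simp
    moreover have "(real K + 3) * w \<le> (real L + 4) * w" using Kle w0 by (simp add: mult_right_mono)
    then have "(real K + 3) / 2 * w < 2 * pi" using wL2 wpi by (simp add: algebra_simps)
    ultimately have "sin ((real K + 3) / 2 * w) < 0" by (simp add: sin_lt_zero)
    then have "sin ((real K + 3) / 2 * w) * sin (w / 2) < 0" using sw2 by (rule mult_neg_pos)
    then have "\<alpha> * (sin ((real K + 3) / 2 * w) * sin (w / 2)) < 0" using apos by (simp add: mult_pos_neg)
    then have "\<alpha> * (sin ((real K + 3) / 2 * w) * sin (w / 2)) / Zc \<alpha> K < 0" using Zp by (rule divide_neg_pos)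
    then show ?thesis unfolding dform by simp
  qed
  have last: "\<forall>K'. 1 \<le> K' \<and> K' \<le> L - 1 \<longrightarrow>
            (let a = alpha_fin L in
              (\<forall>l. (sysE a K' l \<and> l (K' + 2) = 0) \<longleftrightarrow> (\<forall>j\<le>K'+2. l j = lsol a K' j))
              \<and> dval a K' (lsol a K') 0 = - dval a K' (lsol a K') (K' + 1)
              \<and> dval a K' (lsol a K') 0
                  = - a * (sin ((real K' + 3) / 2 * omega a) * sin (omega a / 2)) / Zc a K')"
  proof (intro allI impI)
    fix K' assume K': "1 \<le> K' \<and> K' \<le> L - 1"
    then have L2: "real L \<ge> 2" by linarith
    have K'l: "real K' + 1 \<le> real L" using K' by linarith
    define a where "a = alpha_fin L"
    have th0q: "th0 \<le> pi / 2" unfolding th0_def using L2 pi_gt_zero by (auto simp: field_simps)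
    have ae: "a = 1 / (1 + 2 * cos th0)" unfolding a_def alpha_fin_def th0_def ..
    note A = arg_facts[OF less_imp_le[OF th0p(1)] th0q ae]
    have t2: "(real L + 2) * th0 = 2 * pi" unfolding th0_def by simp
    have "(real K' + 2) * th0 \<le> (real L + 1) * th0" using K'l th0p by (simp add: mult_right_mono)
    also have "\<dots> < (real L + 2) * th0" using th0p by simp
    finally have k2: "(real K' + 2) * th0 < 2 * pi" using t2 by simp
    have k1: "(real K' + 1) * th0 < 2 * pi"
      using k2 th0p by (smt (verit, best) mult_right_mono)
    have tpi: "th0 < pi" using th0q pi_gt_zero by linarith
    have "(\<forall>l. (sysE a K' l \<and> l (K' + 2) = 0) \<longleftrightarrow> (\<forall>j\<le>K'+2. l j = lsol a K' j))
              \<and> dval a K' (lsol a K') 0 = - dval a K' (lsol a K') (K' + 1)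
              \<and> dval a K' (lsol a K') 0
                  = - a * (sin ((real K' + 3) / 2 * omega a) * sin (omega a / 2)) / Zc a K'"
      using core[OF A(3) th0p(1) tpi k1 _ A(4) A(1)] k2 by auto
    then show "let a = alpha_fin L in
              (\<forall>l. (sysE a K' l \<and> l (K' + 2) = 0) \<longleftrightarrow> (\<forall>j\<le>K'+2. l j = lsol a K' j))
              \<and> dval a K' (lsol a K') 0 = - dval a K' (lsol a K') (K' + 1)
              \<and> dval a K' (lsol a K') 0
                  = - a * (sin ((real K' + 3) / 2 * omega a) * sin (omega a / 2)) / Zc a K'"
      unfolding a_def Let_def .
  qed
  show ?thesis using C neg pos last by blast
qed

end
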